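(* Let $n\ge2$ and let $\Omega_n=\{A\in\mathbb{C}^{n\times n}:\rho(A)<1\}$ be the spectral ball, where $\rho$ denotes the spectral radius. Then $\Omega_n$ is a union of immersed complex lines (images of holomorphic maps $\mathbb{C}\to\Omega_n$ that are immersions). Consequently there exists no strictly plurisubharmonic function on $\Omega_n$ that is bounded from above. *)

theory Defs
  imports "HOL-Analysis.Analysis"
begin

text \<open>Complex n x n matrices are modelled as complex^'n^'n (n = CARD('n)).
  The norm on this type is the Frobenius (Euclidean) norm of C^{n^2}.\<close>

definition eigenvalue_of :: "complex^'n^'n \<Rightarrow> complex \<Rightarrow> bool" where
  "eigenvalue_of A c \<longleftrightarrow> (\<exists>v::complex^'n. v \<noteq> 0 \<and> A *v v = c *s v)"

definition spectral_radius :: "complex^'n^'n \<Rightarrow> real" where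
  "spectral_radius A = Max {cmod c | c. eigenvalue_of A c}"

definition spectral_ball :: "(complex^'n^'n) set" where
  "spectral_ball = {A. spectral_radius A < 1}"

definition cscale :: "complex \<Rightarrow> complex^'n^'n \<Rightarrow> complex^'n^'n" where
  "cscale c M = (\<chi> i j. c * M $ i $ j)"

definition holomorphic_immersion :: "(complex \<Rightarrow> complex^'n^'n) \<Rightarrow> bool" where
  "holomorphic_immersion f \<longleftrightarrow>
     (\<forall>i j. (\<lambda>z. f z $ i $ j) holomorphic_on UNIV) \<and>
     (\<forall>z. \<exists>i j. deriv (\<lambda>w. f w $ i $ j) z \<noteq> 0)"

definition usc_on :: "('a::metric_space) set \<Rightarrow> ('a \<Rightarrow> ereal) \<Rightarrow> bool" where
  "usc_on S u \<longleftrightarrow> (\<forall>z\<in>S. \<forall>c. u z < c \<longrightarrow>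
       (\<exists>d>0. \<forall>w\<in>S. dist w z < d \<longrightarrow> u w < c))"

definition circle_mean :: "(complex^'n^'n \<Rightarrow> ereal) \<Rightarrow> complex^'n^'n \<Rightarrow> complex^'n^'n \<Rightarrow> ereal" where
  "circle_mean u a b =
     (let f = (\<lambda>t. u (a + cscale (cis t) b)) in
      ereal (1 / (2 * pi)) *
        (enn2ereal (\<integral>\<^sup>+ t\<in>{0..2*pi}. e2ennreal (f t) \<partial>lborel)
         - enn2ereal (\<integral>\<^sup>+ t\<in>{0..2*pi}. e2ennreal (- f t) \<partial>lborel)))"

text \<open>plurisubharmonic functions u : S -> [-infinity, infinity) (Klimek's definition):
  upper semicontinuous, not identically -infinity on any connected component,
  and subharmonic on every complex line (sub-mean value property on closed discs).\<close>
definition plurisubharmonic_on :: "(complex^'n^'n) set \<Rightarrow> (complex^'n^'n \<Rightarrow> ereal) \<Rightarrow> bool" where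
  "plurisubharmonic_on S u \<longleftrightarrow>
     (\<forall>z\<in>S. u z < \<infinity>) \<and>
     usc_on S u \<and>
     (\<forall>z\<in>S. \<exists>w\<in>connected_component_set S z. u w \<noteq> -\<infinity>) \<and>
     (\<forall>a b. (\<forall>\<zeta>. cmod \<zeta> \<le> 1 \<longrightarrow> a + cscale \<zeta> b \<in> S) \<longrightarrow> u a \<le> circle_mean u a b)"

definition strictly_plurisubharmonic_on :: "(complex^'n^'n) set \<Rightarrow> (complex^'n^'n \<Rightarrow> ereal) \<Rightarrow> bool" where
  "strictly_plurisubharmonic_on S u \<longleftrightarrow>
     plurisubharmonic_on S u \<and>
     (\<forall>z\<in>S. \<exists>r>0. \<exists>\<epsilon>>0. ball z r \<subseteq> S \<and>
        plurisubharmonic_on (ball z r) (\<lambda>w. u w - ereal (\<epsilon> * (norm w)\<^sup>2)))"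

end

theory Submission
  imports Defs "Jordan_Normal_Form.Char_Poly" "HOL-Complex_Analysis.Complex_Analysis"
begin

no_notation Matrix.vec_index (infixl "$" 100)
no_notation Formal_Power_Series.fps_nth (infixl "$" 75)

definition idx :: "'n::finite \<Rightarrow> nat" where
  "idx = (SOME h. bij_betw h (UNIV::'n set) {0..<CARD('n)})"

lemma idx_bij: "bij_betw (idx :: 'n::finite \<Rightarrow> nat) UNIV {0..<CARD('n)}"
proof -
  have "\<exists>h. bij_betw h (UNIV::'n set) {0..<CARD('n)}"
    using ex_bij_betw_finite_nat[of "UNIV::'n set"] by simp
  then show ?thesis unfolding idx_def by (rule someI_ex)
qed

definition ridx :: "nat \<Rightarrow> 'n::finite" where
  "ridx = inv_into UNIV idx"

lemma ridx_bij: "bij_betw (ridx :: nat \<Rightarrow> 'n::finite) {0..<CARD('n)} UNIV"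
  unfolding ridx_def by (rule bij_betw_inv_into[OF idx_bij])

lemma idx_lt[simp]: "idx (k::'n::finite) < CARD('n)"
  using idx_bij[where 'n='n] by (auto simp: bij_betw_def)

lemma ridx_idx[simp]: "ridx (idx (k::'n::finite)) = k"
  unfolding ridx_def using idx_bij[where 'n='n] by (simp add: bij_betw_def)

lemma idx_ridx[simp]: "i < CARD('n) \<Longrightarrow> idx (ridx i :: 'n::finite) = i"
  unfolding ridx_def using idx_bij[where 'n='n]
  by (simp add: bij_betw_def f_inv_into_f)

lemma sum_ridx: "(\<Sum>l=0..<CARD('n). f (ridx l :: 'n::finite)) = (\<Sum>j\<in>UNIV. f j)"
  using sum.reindex_bij_betw[OF ridx_bij[where 'n='n], of f] by simp

definition to_mat :: "complex^'n^'n \<Rightarrow> complex mat" where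
  "to_mat A = Matrix.mat CARD('n::finite) CARD('n) (\<lambda>(i,j). A $ ridx i $ ridx j)"

lemma to_mat_carrier: "to_mat (A::complex^'n^'n) \<in> carrier_mat CARD('n::finite) CARD('n)"
  unfolding to_mat_def by simp

lemma eig_to: assumes "eigenvalue_of (A::complex^'n::finite^'n) c" shows "eigenvalue (to_mat A) c"
proof -
  from assms obtain x where x: "x \<noteq> 0" "A *v x = c *s x" unfolding eigenvalue_of_def by blast
  define v where "v = Matrix.vec CARD('n) (\<lambda>i. x $ (ridx i :: 'n))"
  from x(1) obtain k where k: "x $ k \<noteq> 0" by (metis Finite_Cartesian_Product.vec_eq_iff Finite_Cartesian_Product.zero_index)
  have "v \<noteq> 0\<^sub>v CARD('n)"
  proof
    assume "v = 0\<^sub>v CARD('n)"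
    hence "Matrix.vec_index v (idx k) = 0" by simp
    thus False using k by (simp add: v_def)
  qed
  moreover have "to_mat A *\<^sub>v v = c \<cdot>\<^sub>v v"
  proof (rule eq_vecI)
    fix i assume i: "i < dim_vec (c \<cdot>\<^sub>v v)"
    hence i': "i < CARD('n)" by (simp add: v_def)
    have "Matrix.vec_index (to_mat A *\<^sub>v v) i = (\<Sum>l=0..<CARD('n). A $ ridx i $ (ridx l :: 'n) * x $ ridx l)"
      using i' by (simp add: to_mat_def v_def scalar_prod_def)
    also have "\<dots> = (\<Sum>j\<in>UNIV. A $ ridx i $ j * x $ j)" by (rule sum_ridx)
    also have "\<dots> = (A *v x) $ ridx i" by (simp add: matrix_vector_mult_def)
    also have "\<dots> = c * x $ ridx i" using x(2) by simp
    finally show "Matrix.vec_index (to_mat A *\<^sub>v v) i = Matrix.vec_index (c \<cdot>\<^sub>v v) i"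
      using i' by (simp add: v_def)
  qed (simp add: to_mat_def v_def)
  moreover have "v \<in> carrier_vec CARD('n)" by (simp add: v_def)
  moreover have "dim_row (to_mat A) = CARD('n)" by (simp add: to_mat_def)
  ultimately show ?thesis unfolding eigenvalue_def eigenvector_def by auto
qed

lemma eig_from: assumes "eigenvalue (to_mat (A::complex^'n::finite^'n)) c" shows "eigenvalue_of A c"
proof -
  from assms obtain v where v: "v \<in> carrier_vec CARD('n)" "v \<noteq> 0\<^sub>v CARD('n)"
      "to_mat A *\<^sub>v v = c \<cdot>\<^sub>v v"
    unfolding eigenvalue_def eigenvector_def by (auto simp: to_mat_def)
  define x where "x = (\<chi> k. Matrix.vec_index v (idx (k::'n)))"
  from v(1,2) obtain i where i: "i < CARD('n)" "Matrix.vec_index v i \<noteq> 0"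
    by (metis carrier_vecD eq_vecI index_zero_vec(1,2))
  have "x $ ridx i \<noteq> 0" using i by (simp add: x_def)
  hence "x \<noteq> 0" by auto
  moreover have "A *v x = c *s x"
  proof (subst Finite_Cartesian_Product.vec_eq_iff, intro allI)
    fix k :: 'n
    have "(A *v x) $ k = (\<Sum>j\<in>UNIV. A $ k $ j * Matrix.vec_index v (idx j))"
      by (simp add: matrix_vector_mult_def x_def)
    also have "\<dots> = (\<Sum>l=0..<CARD('n). A $ k $ ridx l * Matrix.vec_index v (idx (ridx l :: 'n)))"
      by (rule sum_ridx[symmetric])
    also have "\<dots> = (\<Sum>l=0..<CARD('n). A $ ridx (idx k) $ ridx l * Matrix.vec_index v l)"
      by (intro sum.cong) auto
    also have "\<dots> = Matrix.vec_index (to_mat A *\<^sub>v v) (idx k)"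
      using v(1) by (simp add: to_mat_def scalar_prod_def)
    also have "\<dots> = c * Matrix.vec_index v (idx k)" using v(1,3) by simp
    finally show "(A *v x) $ k = (c *s x) $ k" by (simp add: x_def)
  qed
  ultimately show ?thesis unfolding eigenvalue_of_def by blast
qed

lemma eig_iff: "eigenvalue_of (A::complex^'n::finite^'n) c \<longleftrightarrow> poly (char_poly (to_mat A)) c = 0"
  using eig_to eig_from eigenvalue_root_char_poly[OF to_mat_carrier] by blast

lemma to_mat_transpose: "to_mat (transpose A) = transpose_mat (to_mat (A::complex^'n::finite^'n))"
  by (rule eq_matI) (auto simp: to_mat_def transpose_def)

lemma eig_transpose: "eigenvalue_of (transpose A) c \<longleftrightarrow> eigenvalue_of (A::complex^'n::finite^'n) c"
  unfolding eig_iff to_mat_transpose using char_poly_transpose_mat[OF to_mat_carrier[of A]] by simp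

lemma char_poly_nz: "char_poly (to_mat (A::complex^'n::finite^'n)) \<noteq> 0"
  using degree_monic_char_poly[OF to_mat_carrier, of A] by auto

lemma eig_finite: "finite {c. eigenvalue_of (A::complex^'n::finite^'n) c}"
  unfolding eig_iff using poly_roots_finite[OF char_poly_nz[of A]] by simp

lemma eig_exists: "\<exists>c. eigenvalue_of (A::complex^'n::finite^'n) c"
proof -
  obtain as where as: "char_poly (to_mat A) = (\<Prod>a\<leftarrow>as. [:- a, 1:])" "length as = CARD('n)"
    using char_poly_factorized[OF to_mat_carrier] by blast
  then obtain a as' where "as = a # as'" by (cases as) auto
  hence "poly (char_poly (to_mat A)) a = 0" using as(1) by (simp add: poly_prod_list)
  thus ?thesis unfolding eig_iff by blast
qed

lemma sr_lt1: "spectral_radius (A::complex^'n::finite^'n) < 1 \<longleftrightarrow> (\<forall>c. eigenvalue_of A c \<longrightarrow> cmod c < 1)"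
proof -
  have S: "{cmod c | c. eigenvalue_of A c} = cmod ` {c. eigenvalue_of A c}" by auto
  have f: "finite {cmod c | c. eigenvalue_of A c}" unfolding S using eig_finite[of A] by simp
  have ne: "{cmod c | c. eigenvalue_of A c} \<noteq> {}" using eig_exists by auto
  show ?thesis unfolding spectral_radius_def using Max_less_iff[OF f ne] by auto
qed

lemma exists_other: assumes "CARD('n::finite) \<ge> 2" shows "\<exists>l::'n. l \<noteq> k"
proof (rule ccontr)
  assume "\<not> ?thesis"
  hence "(UNIV::'n set) = {k}" by auto
  hence "CARD('n) = card {k}" by (simp only:)
  with assms show False by simp
qed

lemma part1:
  assumes n2: "CARD('n::finite) \<ge> 2" and A: "(A::complex^'n^'n) \<in> spectral_ball"
  shows "\<exists>B. B \<noteq> 0 \<and> (\<forall>z. A + cscale z B \<in> spectral_ball) \<and> (\<exists>i j. B $ i $ j \<noteq> 0)"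
proof -
  have Aev: "\<And>c. eigenvalue_of A c \<Longrightarrow> cmod c < 1"
    using A sr_lt1[of A] unfolding spectral_ball_def by auto
  obtain c where "eigenvalue_of (transpose A) c" using eig_exists by blast
  then obtain w where w: "w \<noteq> 0" "transpose A *v w = c *s w" unfolding eigenvalue_of_def by blast
  have cA: "eigenvalue_of A c" using eig_transpose \<open>eigenvalue_of (transpose A) c\<close> by blast
  have wA: "(\<Sum>i\<in>UNIV. A $ i $ j * w $ i) = c * w $ j" for j
  proof -
    have "(transpose A *v w) $ j = (c *s w) $ j" using w(2) by simp
    thus ?thesis by (simp add: matrix_vector_mult_def transpose_def)
  qed
  from w(1) obtain k where k: "w $ k \<noteq> 0"
    by (metis Finite_Cartesian_Product.vec_eq_iff Finite_Cartesian_Product.zero_index)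
  obtain l where l: "l \<noteq> k" using exists_other[OF n2] by blast
  define v where "v = (\<chi> i. if i = k then w $ l else if i = l then - w $ k else 0)"
  have wv: "(\<Sum>i\<in>UNIV. w $ i * v $ i) = 0"
  proof -
    have "(\<Sum>i\<in>UNIV. w $ i * v $ i) = (\<Sum>i\<in>{k,l}. w $ i * v $ i)"
      by (rule sum.mono_neutral_right) (auto simp: v_def)
    also have "\<dots> = 0" using l by (simp add: v_def)
    finally show ?thesis .
  qed
  define B where "B = (\<chi> i j. v $ i * w $ j)"
  have Blk: "B $ l $ k \<noteq> 0" using l k by (simp add: B_def v_def)
  hence "B \<noteq> 0" by auto
  moreover have "A + cscale z B \<in> spectral_ball" for z
  proof -
    let ?M = "A + cscale z B"
    have "cmod \<mu> < 1" if ev: "eigenvalue_of ?M \<mu>" for \<mu>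
    proof -
      from ev obtain x where x: "x \<noteq> 0" "?M *v x = \<mu> *s x" unfolding eigenvalue_of_def by blast
      define s where "s = (\<Sum>j\<in>UNIV. w $ j * x $ j)"
      have Mx: "(?M *v x) $ i = (A *v x) $ i + z * v $ i * s" for i
        by (simp add: matrix_vector_mult_def cscale_def B_def s_def sum.distrib
              distrib_right sum_distrib_left mult.assoc)
      have "(\<Sum>i\<in>UNIV. w $ i * (?M *v x) $ i) = (\<Sum>i\<in>UNIV. w $ i * (A *v x) $ i) + z * s * (\<Sum>i\<in>UNIV. w $ i * v $ i)"
        unfolding Mx by (simp add: algebra_simps sum.distrib sum_distrib_left)
      also have "\<dots> = (\<Sum>i\<in>UNIV. w $ i * (A *v x) $ i)" using wv by simp
      also have "\<dots> = (\<Sum>i\<in>UNIV. \<Sum>j\<in>UNIV. w $ i * A $ i $ j * x $ j)"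
        by (simp add: matrix_vector_mult_def sum_distrib_left mult.assoc)
      also have "\<dots> = (\<Sum>j\<in>UNIV. (\<Sum>i\<in>UNIV. A $ i $ j * w $ i) * x $ j)"
        by (subst sum.swap) (simp add: sum_distrib_left sum_distrib_right mult_ac)
      also have "\<dots> = c * s" by (simp add: wA s_def sum_distrib_left mult.assoc)
      finally have e1: "(\<Sum>i\<in>UNIV. w $ i * (?M *v x) $ i) = c * s" .
      have e2: "(\<Sum>i\<in>UNIV. w $ i * (?M *v x) $ i) = \<mu> * s"
        unfolding x(2) by (simp add: s_def sum_distrib_left mult.left_commute)
      have "\<mu> * s = c * s" using e1 e2 by argo
      hence "(\<mu> - c) * s = 0" by (simp add: left_diff_distrib)
      hence "\<mu> = c \<or> s = 0" by auto
      thus ?thesis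
      proof
        assume "\<mu> = c" thus ?thesis using Aev[OF cA] by simp
      next
        assume "s = 0"
        hence "A *v x = \<mu> *s x" using x(2) Mx
          by (metis (no_types, lifting) Finite_Cartesian_Product.vec_eq_iff add.right_neutral mult_zero_right)
        hence "eigenvalue_of A \<mu>" using x(1) unfolding eigenvalue_of_def by blast
        thus ?thesis using Aev by blast
      qed
    qed
    thus ?thesis unfolding spectral_ball_def using sr_lt1[of ?M] by auto
  qed
  ultimately show ?thesis using Blk by blast
qed

lemma cscale_0[simp]: "cscale 0 B = 0"
  by (simp add: cscale_def Finite_Cartesian_Product.vec_eq_iff)

lemma line_immersion:
  assumes "B $ i $ j \<noteq> 0"
  shows "holomorphic_immersion (\<lambda>z. A + cscale z (B::complex^'n::finite^'n))"
proof -
  have e: "(\<lambda>z. (A + cscale z B) $ i' $ j') = (\<lambda>z. A $ i' $ j' + z * B $ i' $ j')" for i' j'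
    by (simp add: cscale_def)
  have d: "deriv (\<lambda>w. A $ i' $ j' + w * B $ i' $ j') z = B $ i' $ j'" for i' j' z
    by (rule DERIV_imp_deriv) (auto intro!: derivative_eq_intros)
  show ?thesis unfolding holomorphic_immersion_def e d using assms
    by (auto intro!: holomorphic_intros)
qed

lemma log_mean_HK:
  fixes z :: complex and \<rho> :: real
  assumes "0 < \<rho>" "\<rho> < norm z"
  shows "((\<lambda>t. ln (norm (z + \<rho> * cis t))) has_integral (2*pi*ln(norm z))) {0..2*pi}"
proof -
  have z0: "z \<noteq> 0" using assms by auto
  define f where "f w = Ln (w / z)" for w
  have nr: "w / z \<notin> \<real>\<^sub>\<le>\<^sub>0" if "w \<in> cball z \<rho>" for w
  proof -
    have "norm (w / z - 1) = norm (w - z) / norm z" using z0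
      by (metis diff_divide_distrib divide_self_if norm_divide)
    also have "\<dots> \<le> \<rho> / norm z" using that z0 by (simp add: dist_norm norm_minus_commute divide_right_mono)
    also have "\<dots> < 1"
    proof -
      have pz: "0 < cmod z" using assms by linarith
      show ?thesis using pz assms(2) by (simp add: divide_less_eq_1_pos)
    qed
    finally have "norm (w / z - 1) < 1" .
    hence "\<bar>Re (w / z - 1)\<bar> < 1" using abs_Re_le_cmod le_less_trans by blast
    hence "Re (w / z) > 0" by simp
    thus ?thesis by (auto simp: complex_nonpos_Reals_iff)
  qed
  have cont: "continuous_on (cball z \<rho>) f" unfolding f_def
    using nr by (intro continuous_intros) auto
  have hol: "f holomorphic_on (ball z \<rho>)" unfolding f_def
    using nr by (intro holomorphic_intros) auto
  have "((\<lambda>u. f u / (u - z)) has_contour_integral (2 * of_real pi * \<i> * f z)) (circlepath z \<rho>)"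
    by (rule Cauchy_integral_circlepath[OF cont hol]) (simp add: assms)
  hence "((\<lambda>u. f u / (u - z)) has_contour_integral 0) (part_circlepath z \<rho> 0 (2*pi))"
    using z0 by (simp add: f_def circlepath_def)
  hence hi1: "((\<lambda>t. f (z + \<rho> * cis t) / (z + \<rho> * cis t - z) * \<rho> * \<i> * cis t) has_integral 0) {0..2*pi}"
    by (subst (asm) has_contour_integral_part_circlepath_iff) auto
  have eqt: "f (z + \<rho> * cis t) / (z + \<rho> * cis t - z) * \<rho> * \<i> * cis t = \<i> * f (z + \<rho> * cis t)" for t
  proof -
    have r0: "complex_of_real \<rho> \<noteq> 0" using assms by simp
    have c0: "cis t \<noteq> 0" by simp
    have gen: "\<And>a r c. r \<noteq> 0 \<Longrightarrow> c \<noteq> (0::complex) \<Longrightarrow> a / (r * c) * r * \<i> * c = \<i> * a"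
      by (simp add: field_simps)
    show ?thesis using gen[OF r0 c0] by simp
  qed
  have "(\<lambda>t. f (z + \<rho> * cis t) / (z + \<rho> * cis t - z) * \<rho> * \<i> * cis t) = (\<lambda>t. \<i> * f (z + \<rho> * cis t))"
    by (rule ext) (rule eqt)
  with hi1 have "((\<lambda>t. \<i> * f (z + \<rho> * cis t)) has_integral 0) {0..2*pi}" by (simp only:)
  from has_integral_mult_right[OF this, of "-\<i>"]
  have "((\<lambda>t. - \<i> * (\<i> * f (z + \<rho> * cis t))) has_integral 0) {0..2*pi}" by (simp only: mult_zero_right)
  moreover have "(\<lambda>t. - \<i> * (\<i> * f (z + \<rho> * cis t))) = (\<lambda>t. f (z + \<rho> * cis t))"
    by (rule ext) (simp add: algebra_simps)
  ultimately have "((\<lambda>t. f (z + \<rho> * cis t)) has_integral 0) {0..2*pi}" by (simp only:)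
  from has_integral_linear[OF this bounded_linear_Re]
  have "((\<lambda>t. Re (f (z + \<rho> * cis t))) has_integral 0) {0..2*pi}" by (simp add: o_def)
  moreover have "Re (f (z + \<rho> * cis t)) = ln (norm (z + \<rho> * cis t)) - ln (norm z)" for t
  proof -
    have "z + \<rho> * cis t \<in> cball z \<rho>" using assms by (simp add: dist_norm norm_mult)
    hence "(z + \<rho> * cis t) / z \<noteq> 0" using nr by fastforce
    hence "z + \<rho> * cis t \<noteq> 0" by simp
    thus ?thesis unfolding f_def using z0
      by (simp add: norm_divide ln_div)
  qed
  ultimately have "((\<lambda>t. ln (norm (z + \<rho> * cis t)) - ln (norm z)) has_integral 0) {0..2*pi}" by simp
  from has_integral_add[OF this has_integral_const_real[of "ln (norm z)" 0 "2*pi"]]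
  show ?thesis by (simp add: mult_ac)
qed

definition Imean :: "(real \<Rightarrow> real) \<Rightarrow> real" where
  "Imean f = (LINT t:{0..2*pi}|lborel. f t)"

definition circp :: "complex \<Rightarrow> real \<Rightarrow> real \<Rightarrow> complex" where
  "circp z \<rho> t = z + complex_of_real \<rho> * cis t"

definition uscr :: "'a::metric_space set \<Rightarrow> ('a \<Rightarrow> real) \<Rightarrow> bool" where
  "uscr S f \<longleftrightarrow> (\<forall>z\<in>S. \<forall>c. f z < c \<longrightarrow> (\<exists>d>0. \<forall>w\<in>S. dist w z < d \<longrightarrow> f w < c))"

lemma norm_circ_diff: "norm (circp z \<rho> t - z) = \<bar>\<rho>\<bar>"
  by (simp add: circp_def norm_mult)

lemma circ_cont: "continuous_on UNIV (circp z \<rho>)"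
  unfolding circp_def by (intro continuous_intros)

lemma circ_meas[measurable]: "circp z \<rho> \<in> borel_measurable borel"
  by (rule borel_measurable_continuous_onI[OF circ_cont])

lemma I_integrable_bounded:
  fixes f :: "real \<Rightarrow> real"
  assumes "f \<in> borel_measurable borel" "\<And>t. t \<in> {0..2*pi} \<Longrightarrow> \<bar>f t\<bar> \<le> C"
  shows "set_integrable lborel {0..2*pi} f"
  unfolding set_integrable_def
  by (rule integrableI_bounded_set_indicator[where B=C]) (use assms in auto)

lemma I_const: "Imean (\<lambda>t. c) = 2*pi*c"
  unfolding Imean_def by (subst set_integral_const) auto

lemma I_mono: "set_integrable lborel {0..2*pi} f \<Longrightarrow> set_integrable lborel {0..2*pi} g \<Longrightarrow>
   (\<And>t. t \<in> {0..2*pi} \<Longrightarrow> f t \<le> g t) \<Longrightarrow> Imean f \<le> Imean g"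
  unfolding Imean_def by (rule set_integral_mono)

lemma uscr_closed:
  assumes "uscr K v" "closed K"
  shows "closed {w\<in>K. c \<le> v w}"
proof (subst closed_limpt, intro allI impI)
  fix x assume x: "x islimpt {w \<in> K. c \<le> v w}"
  hence xK: "x \<in> K" using assms(2) closed_limpt islimpt_subset[of x _ K] by blast
  show "x \<in> {w \<in> K. c \<le> v w}"
  proof (rule ccontr)
    assume "x \<notin> {w \<in> K. c \<le> v w}"
    hence "v x < c" using xK by auto
    then obtain d where d: "d > 0" "\<forall>w\<in>K. dist w x < d \<longrightarrow> v w < c"
      using assms(1) xK unfolding uscr_def by blast
    from x d(1) obtain y where "y \<in> {w \<in> K. c \<le> v w}" "dist y x < d"
      unfolding islimpt_approachable by blast
    with d(2) show False by auto
  qed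
qed

lemma uscr_attains_max:
  fixes v :: "complex \<Rightarrow> real"
  assumes "uscr K v" "compact K" "K \<noteq> {}" "\<And>w. w \<in> K \<Longrightarrow> v w \<le> C"
  shows "\<exists>z\<in>K. \<forall>w\<in>K. v w \<le> v z"
proof -
  define m where "m = Sup (v ` K)"
  have bdd: "bdd_above (v ` K)" using assms(4) by (intro bdd_aboveI[of _ C]) auto
  have le: "v w \<le> m" if "w \<in> K" for w unfolding m_def using bdd that by (auto intro: cSup_upper)
  define F where "F n = {w\<in>K. m - 1 / real (Suc n) \<le> v w}" for n
  have "compact (F n)" for n
  proof -
    have "closed (F n)" unfolding F_def
      by (rule uscr_closed[OF assms(1) compact_imp_closed[OF assms(2)]])
    moreover have "F n \<subseteq> K" unfolding F_def by auto
    ultimately show ?thesis using compact_Int_closed[OF assms(2)] by (metis inf.absorb_iff2)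
  qed
  moreover have "F n \<noteq> {}" for n
  proof -
    have "m - 1 / real (Suc n) < m" by simp
    then obtain y where "y \<in> v ` K" "m - 1 / real (Suc n) < y"
      unfolding m_def using less_cSup_iff[OF _ bdd] assms(3) by (metis image_is_empty m_def)
    thus ?thesis unfolding F_def by force
  qed
  moreover have "F n \<subseteq> F k" if "k \<le> n" for k n
  proof -
    have "1 / real (Suc n) \<le> 1 / real (Suc k)" using that by (simp add: frac_le)
    thus ?thesis unfolding F_def by auto
  qed
  ultimately have "\<Inter>(range F) \<noteq> {}" by (intro compact_nest) auto
  then obtain z where z: "\<And>n. z \<in> F n" by blast
  hence zK: "z \<in> K" unfolding F_def by auto
  have "m \<le> v z"
  proof (rule field_le_epsilon)
    fix e :: real assume e: "0 < e"
    obtain n where "1 / real (Suc n) < e"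
      using e by (metis nat_approx_posE)
    moreover have "m - 1 / real (Suc n) \<le> v z" using z[of n] unfolding F_def by auto
    ultimately show "m \<le> v z + e" by linarith
  qed
  thus ?thesis using zK le by (meson order_trans)
qed

lemma max_principle:
  fixes v :: "complex \<Rightarrow> real"
  assumes r: "0 < r" "r < R"
   and usc: "uscr {w. r \<le> norm w \<and> norm w \<le> R} v"
   and meas: "v \<in> borel_measurable borel"
   and bnd: "\<And>w. r \<le> norm w \<Longrightarrow> norm w \<le> R \<Longrightarrow> \<bar>v w\<bar> \<le> C"
   and sub: "\<And>z \<rho>. 0 < \<rho> \<Longrightarrow> r < norm z - \<rho> \<Longrightarrow> norm z + \<rho> < R \<Longrightarrow> 2*pi * v z \<le> Imean (\<lambda>t. v (circp z \<rho> t))"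
   and bdry: "\<And>w. norm w = r \<or> norm w = R \<Longrightarrow> v w \<le> T"
   and w: "r \<le> norm w" "norm w \<le> R"
  shows "v w \<le> T"
proof (rule ccontr)
  define K where "K = {w::complex. r \<le> norm w \<and> norm w \<le> R}"
  assume "\<not> v w \<le> T" hence wT: "T < v w" by simp
  have wK: "w \<in> K" using w by (simp add: K_def)
  have Keq: "K = cball 0 R - ball 0 r" by (auto simp: K_def)
  have Kc: "compact K" unfolding Keq by (intro compact_diff) auto
  have uK: "uscr K v" using usc by (simp add: K_def)
  have bK: "\<And>x. x \<in> K \<Longrightarrow> v x \<le> C" using bnd unfolding K_def
    by (metis (no_types, lifting) abs_le_D1 mem_Collect_eq)
  have Kne: "K \<noteq> {}" using wK by auto
  obtain z1 where z1: "z1 \<in> K" "\<And>x. x \<in> K \<Longrightarrow> v x \<le> v z1"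
    using uscr_attains_max[OF uK Kc Kne bK] by blast
  define m where "m = v z1"
  have mT: "T < m" using z1(2)[OF wK] wT by (simp add: m_def)
  define Ks where "Ks = {x\<in>K. m \<le> v x}"
  have "closed Ks" unfolding Ks_def
    by (rule uscr_closed[OF uK compact_imp_closed[OF Kc]])
  from compact_Int_closed[OF Kc this] have "compact (K \<inter> Ks)" .
  moreover have "K \<inter> Ks = Ks" by (auto simp: Ks_def)
  ultimately have Ksc: "compact Ks" by simp
  have "z1 \<in> Ks" using z1 by (simp add: Ks_def m_def)
  hence "Re ` Ks \<noteq> {}" by auto
  moreover have "compact (Re ` Ks)"
    by (rule compact_continuous_image[OF _ Ksc]) (intro continuous_intros)
  ultimately obtain a where "a \<in> Re ` Ks" "\<forall>y\<in>Re ` Ks. y \<le> a"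
    using compact_attains_sup by metis
  then obtain z where z: "z \<in> Ks" "\<And>x. x \<in> Ks \<Longrightarrow> Re x \<le> Re z" by auto
  have zK: "z \<in> K" using z(1) by (simp add: Ks_def)
  have "m \<le> v z" using z(1) by (simp add: Ks_def)
  moreover have "v z \<le> m" using z1(2)[OF zK] by (simp add: m_def)
  ultimately have vz: "v z = m" by linarith
  have zr: "r < norm z" "norm z < R"
  proof -
    have "\<not> (norm z = r \<or> norm z = R)" using bdry[of z] vz mT by auto
    thus "r < norm z" "norm z < R" using zK by (auto simp: K_def)
  qed
  define \<rho> where "\<rho> = min (norm z - r) (R - norm z) / 2"
  have rr: "2*\<rho> \<le> norm z - r" "2*\<rho> \<le> R - norm z" "2*\<rho> = norm z - r \<or> 2*\<rho> = R - norm z"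
    unfolding \<rho>_def by (auto simp: min_def)
  have \<rho>1: "0 < \<rho>" using rr(3) zr by (elim disjE) linarith+
  have \<rho>2: "r < norm z - \<rho>" using zr rr \<rho>1 by linarith
  have \<rho>3: "norm z + \<rho> < R" using zr rr \<rho>1 by linarith
  note \<rho> = \<rho>1 \<rho>2 \<rho>3
  have cK: "circp z \<rho> t \<in> K" for t
  proof -
    have n: "norm (circp z \<rho> t - z) = \<rho>" using norm_circ_diff[of z \<rho> t] \<rho>(1) by simp
    have "norm (circp z \<rho> t) \<le> norm z + \<rho>" using norm_triangle_sub[of "circp z \<rho> t" z] n
      by linarith
    moreover have "norm z - \<rho> \<le> norm (circp z \<rho> t)" using norm_triangle_sub[of z "circp z \<rho> t"] n
      norm_minus_commute[of z "circp z \<rho> t"] by linarith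
    ultimately show ?thesis using \<rho> by (simp add: K_def)
  qed
  have le_m: "v (circp z \<rho> t) \<le> m" for t using z1(2)[OF cK] by (simp add: m_def)
  have lt_m: "v (circp z \<rho> t) < m" if t: "t \<in> {0<..<pi/2}" for t
  proof -
    have "cos t > 0" using t by (auto intro: cos_gt_zero)
    hence "Re (circp z \<rho> t) > Re z" using \<rho>(1) by (simp add: circp_def)
    hence "circp z \<rho> t \<notin> Ks" using z(2) by force
    thus ?thesis using cK[of t] unfolding Ks_def by auto
  qed
  define g where "g t = m - v (circp z \<rho> t)" for t
  have bndc: "\<bar>v (circp z \<rho> t)\<bar> \<le> C" for t using bnd cK[of t] by (simp add: K_def)
  have vmeas: "(\<lambda>t. v (circp z \<rho> t)) \<in> borel_measurable borel"
    by (rule measurable_compose[OF circ_meas meas])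
  have ivc: "set_integrable lborel {0..2*pi} (\<lambda>t. v (circp z \<rho> t))"
    by (rule I_integrable_bounded[OF vmeas]) (use bndc in auto)
  have icm: "set_integrable lborel {0..2*pi} (\<lambda>t. m)"
    by (rule I_integrable_bounded[where C="\<bar>m\<bar>"]) auto
  have Ig: "Imean g = 2*pi*m - Imean (\<lambda>t. v (circp z \<rho> t))"
    unfolding g_def Imean_def using set_integral_diff(2)[OF icm ivc] I_const[of m] unfolding Imean_def by simp
  have gint: "set_integrable lborel {0..2*pi} g"
    unfolding g_def by (rule set_integral_diff(1)[OF icm ivc])
  have "Imean g \<le> 0" using Ig sub[OF \<rho>] vz by simp
  moreover have "0 \<le> Imean g"
    using I_mono[of "\<lambda>t. 0" g] gint I_const[of 0] le_m
    by (simp add: g_def I_integrable_bounded[where C=0])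
  ultimately have "Imean g = 0" by simp
  hence int0: "integral\<^sup>L lborel (\<lambda>t. indicator {0..2*pi} t *\<^sub>R g t) = 0"
    unfolding Imean_def set_lebesgue_integral_def .
  have gi: "integrable lborel (\<lambda>t. indicator {0..2*pi} t *\<^sub>R g t)"
    using gint unfolding set_integrable_def .
  have nn: "AE t in lborel. 0 \<le> indicator {0..2*pi} t *\<^sub>R g t"
    using le_m by (auto simp: g_def indicator_def)
  have "AE t in lborel. indicator {0..2*pi} t *\<^sub>R g t = 0"
    using integral_nonneg_eq_0_iff_AE[OF gi nn] int0 by simp
  hence "AE t in lborel. t \<notin> {0<..<pi/2}"
  proof (rule eventually_mono)
    fix t assume h: "indicator {0..2*pi} t *\<^sub>R g t = 0"
    show "t \<notin> {0<..<pi/2}"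
    proof
      assume t: "t \<in> {0<..<pi/2}"
      hence "t \<in> {0..2*pi}" by auto
      hence "g t = 0" using h by simp
      thus False using lt_m[OF t] by (simp add: g_def)
    qed
  qed
  hence "{x\<in>space lborel. \<not> x \<notin> {0<..<pi/2}} \<in> null_sets lborel"
    by (subst AE_iff_null[symmetric]) auto
  moreover have "{x\<in>space lborel. \<not> x \<notin> {0<..<pi/2}} = {0<..<pi/2::real}" by auto
  ultimately have "{0<..<pi/2::real} \<in> null_sets lborel" by simp
  hence "emeasure lborel {0<..<pi/2::real} = 0" by (simp add: null_sets_def)
  thus False by simp
qed

lemma uscr_subset: "uscr S f \<Longrightarrow> T \<subseteq> S \<Longrightarrow> uscr T f"
  unfolding uscr_def by (meson subsetD)

lemma uscr_add_cont:
  assumes "uscr S f" "continuous_on S g"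
  shows "uscr S (\<lambda>x. f x + g x)"
  unfolding uscr_def
proof (intro ballI allI impI)
  fix z c assume z: "z \<in> S" and lt: "f z + g z < c"
  define e where "e = (c - f z - g z) / 2"
  have e: "e > 0" using lt by (simp add: e_def)
  have "f z < f z + e" using e by simp
  then obtain d1 where d1: "d1 > 0" "\<forall>w\<in>S. dist w z < d1 \<longrightarrow> f w < f z + e"
    using assms(1) z unfolding uscr_def by blast
  obtain d2 where d2: "d2 > 0" "\<forall>w\<in>S. dist w z < d2 \<longrightarrow> dist (g w) (g z) < e"
    using assms(2) z e unfolding continuous_on_iff by blast
  show "\<exists>d>0. \<forall>w\<in>S. dist w z < d \<longrightarrow> f w + g w < c"
  proof (intro exI[of _ "min d1 d2"] conjI ballI impI)
    show "0 < min d1 d2" using d1 d2 by simp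
    fix w assume w: "w \<in> S" "dist w z < min d1 d2"
    have "f w < f z + e" using d1 w by simp
    moreover have "\<bar>g w - g z\<bar> < e" using d2 w by (simp add: dist_real_def)
    hence "g w < g z + e" by (simp add: abs_less_iff)
    moreover have "f z + e + (g z + e) = c" by (simp add: e_def field_simps)
    ultimately show "f w + g w < c" by linarith
  qed
qed

lemma log_mean_I:
  assumes "0 < \<rho>" "\<rho> < norm z"
  shows "Imean (\<lambda>t. ln (norm (circp z \<rho> t))) = 2*pi*ln(norm z)"
    and "set_integrable lborel {0..2*pi} (\<lambda>t. ln (norm (circp z \<rho> t)))"
proof -
  have nz: "norm (circp z \<rho> t) > 0" for t
  proof -
    have "norm z \<le> norm (circp z \<rho> t) + norm (z - circp z \<rho> t)" by (rule norm_triangle_sub)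
    moreover have "norm (z - circp z \<rho> t) = \<rho>" using norm_circ_diff[of z \<rho> t] assms(1)
      by (simp add: norm_minus_commute)
    ultimately show ?thesis using assms by linarith
  qed
  have "continuous_on {0..2*pi} (\<lambda>t. ln (norm (circp z \<rho> t)))"
    using nz circ_cont[of z \<rho>] by (intro continuous_intros continuous_on_subset[OF circ_cont]) auto
  thus si: "set_integrable lborel {0..2*pi} (\<lambda>t. ln (norm (circp z \<rho> t)))"
    by (rule borel_integrable_atLeastAtMost')
  have "((\<lambda>t. ln (norm (circp z \<rho> t))) has_integral (2*pi*ln(norm z))) {0..2*pi}"
    using log_mean_HK[OF assms] by (simp add: circp_def)
  thus "Imean (\<lambda>t. ln (norm (circp z \<rho> t))) = 2*pi*ln(norm z)"
    unfolding Imean_def set_borel_integral_eq_integral(2)[OF si] by (rule integral_unique)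
qed

lemma norm_circ0: "0 \<le> \<rho> \<Longrightarrow> norm (circp 0 \<rho> t) = \<rho>"
  by (simp add: circp_def norm_mult)

lemma circ_norm_bounds:
  assumes "0 \<le> \<rho>"
  shows "norm (circp z \<rho> t) \<le> norm z + \<rho>" "norm z - \<rho> \<le> norm (circp z \<rho> t)"
proof -
  have n: "norm (circp z \<rho> t - z) = \<rho>" using norm_circ_diff[of z \<rho> t] assms by simp
  show "norm (circp z \<rho> t) \<le> norm z + \<rho>" using norm_triangle_sub[of "circp z \<rho> t" z] n by linarith
  show "norm z - \<rho> \<le> norm (circp z \<rho> t)" using norm_triangle_sub[of z "circp z \<rho> t"] n
      norm_minus_commute[of z "circp z \<rho> t"] by linarith
qed

lemma outer_bound:
  fixes h :: "complex \<Rightarrow> real"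
  assumes bnd: "\<And>w. \<bar>h w\<bar> \<le> C"
   and usc: "uscr UNIV h"
   and meas: "h \<in> borel_measurable borel"
   and sub: "\<And>z \<rho>. 0 < \<rho> \<Longrightarrow> 2*pi * h z \<le> Imean (\<lambda>t. h (circp z \<rho> t))"
   and r: "0 < r" and z: "r < norm z" and e: "0 < e"
  shows "h z \<le> Sup (h ` {w. norm w = r}) + e * ln (norm z / r)"
proof -
  define S where "S = Sup (h ` {w. norm w = r})"
  have C0: "0 \<le> C" using bnd[of 0] by linarith
  have ne: "{w::complex. norm w = r} \<noteq> {}"
    using r by (intro ex_in_conv[THEN iffD1] exI[of _ "complex_of_real r"]) auto
  have bdd: "bdd_above (h ` {w. norm w = r})" using bnd by (intro bdd_aboveI[of _ C]) (auto simp: abs_le_iff)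
  have Sup: "h w \<le> S" if "norm w = r" for w unfolding S_def using bdd that by (auto intro: cSup_upper)
  have SC: "-C \<le> S" using Sup[of "complex_of_real r"] bnd[of "complex_of_real r"] r by (simp add: abs_le_iff)
  define R where "R = max (norm z + 1) (r * exp (2*C/e))"
  have rR: "r < R" using z by (simp add: R_def)
  have lnR: "2*C/e \<le> ln (R / r)"
  proof -
    have "r * exp (2*C/e) \<le> R" by (simp add: R_def)
    hence "exp (2*C/e) \<le> R / r" using r by (simp add: field_simps)
    thus ?thesis using ln_le_cancel_iff[of "exp(2*C/e)" "R/r"] r rR by simp
  qed
  have eln: "2*C \<le> e * ln (R / r)" using lnR e by (simp add: field_simps)
  define v where "v w = h w + (- e * ln (norm w / r))" for w
  let ?K = "{w::complex. r \<le> norm w \<and> norm w \<le> R}"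
  have "v z \<le> S"
  proof (rule max_principle[of r R v "C + e * ln (R / r)" S z])
    show "0 < r" "r < R" by (fact r, fact rR)
    have nz: "norm w / r \<noteq> 0" if "w \<in> ?K" for w using that r by auto
    have cl: "continuous_on ?K (\<lambda>w. - e * ln (norm w / r))"
      by (intro continuous_intros) (use nz r in auto)
    show "uscr ?K v" unfolding v_def
      by (rule uscr_add_cont[OF uscr_subset[OF usc] cl]) simp
    have nm: "(\<lambda>w::complex. norm w / r) \<in> borel_measurable borel"
      by (rule borel_measurable_continuous_onI) (intro continuous_intros, use r in auto)
    have lm: "(\<lambda>w::complex. ln (norm w / r)) \<in> borel_measurable borel"
      by (rule borel_measurable_ln[OF nm])
    show "v \<in> borel_measurable borel" unfolding v_def
      by (intro borel_measurable_add[OF meas] borel_measurable_times[OF borel_measurable_const lm])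
    show "\<bar>v w\<bar> \<le> C + e * ln (R / r)" if "r \<le> norm w" "norm w \<le> R" for w
    proof -
      have "0 \<le> ln (norm w / r)" using that r by simp
      moreover have "ln (norm w / r) \<le> ln (R / r)"
      proof -
        have nw: "0 < norm w" "0 < R" using that r by linarith+
        have p: "0 < norm w / r" "0 < R / r" using nw r by (simp_all add: divide_pos_pos)
        have "norm w / r \<le> R / r" using that r by (simp add: divide_right_mono)
        thus ?thesis using ln_le_cancel_iff[OF p] by simp
      qed
      ultimately have "\<bar>e * ln (norm w / r)\<bar> \<le> e * ln (R / r)" using e
        by (simp add: abs_mult mult_left_mono)
      thus ?thesis using bnd[of w] unfolding v_def by linarith
    qed
    show "2*pi * v z' \<le> Imean (\<lambda>t. v (circp z' \<rho> t))"
      if "0 < \<rho>" "r < norm z' - \<rho>" "norm z' + \<rho> < R" for z' \<rho>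
    proof -
      have \<rho>z: "\<rho> < norm z'" using that r by linarith
      have pos: "0 < norm (circp z' \<rho> t)" for t
        using circ_norm_bounds(2)[of \<rho> z' t] that r by linarith
      have lsplit: "ln (norm (circp z' \<rho> t) / r) = ln (norm (circp z' \<rho> t)) - ln r" for t
        using pos[of t] r by (simp add: ln_div)
      have hi: "set_integrable lborel {0..2*pi} (\<lambda>t. h (circp z' \<rho> t))"
        by (rule I_integrable_bounded[where C=C]) (auto intro: measurable_compose[OF circ_meas meas] bnd)
      note li = log_mean_I[OF that(1) \<rho>z]
      have ci: "set_integrable lborel {0..2*pi} (\<lambda>t. ln r)"
        by (rule I_integrable_bounded[where C="\<bar>ln r\<bar>"]) auto
      have "Imean (\<lambda>t. v (circp z' \<rho> t)) = Imean (\<lambda>t. h (circp z' \<rho> t) - e * (ln (norm (circp z' \<rho> t)) - ln r))"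
        unfolding v_def lsplit by (simp add: algebra_simps)
      also have "\<dots> = Imean (\<lambda>t. h (circp z' \<rho> t)) - e * (Imean (\<lambda>t. ln (norm (circp z' \<rho> t))) - Imean (\<lambda>t. ln r))"
      proof -
        have d1: "set_integrable lborel {0..2*pi} (\<lambda>t. ln (norm (circp z' \<rho> t)) - ln r)"
          using li(2) ci by (rule set_integral_diff(1))
        have d2: "set_integrable lborel {0..2*pi} (\<lambda>t. e * (ln (norm (circp z' \<rho> t)) - ln r))"
          using d1 by simp
        show ?thesis unfolding Imean_def
          using set_integral_diff(2)[OF hi d2] set_integral_diff(2)[OF li(2) ci] by simp
      qed
      also have "\<dots> = Imean (\<lambda>t. h (circp z' \<rho> t)) - e * (2*pi*ln (norm z') - 2*pi*ln r)"
        using li(1) I_const[of "ln r"] by simp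
      moreover have lz: "ln (norm z' / r) = ln (norm z') - ln r"
      proof -
        have "0 < norm z'" using \<rho>z that(1) by linarith
        thus ?thesis using r by (simp add: ln_div)
      qed
      ultimately have eqI: "Imean (\<lambda>t. v (circp z' \<rho> t)) = Imean (\<lambda>t. h (circp z' \<rho> t)) - 2*pi*(e * ln (norm z' / r))"
        unfolding lz by (simp add: algebra_simps)
      have "2*pi * v z' = 2*pi * h z' - 2*pi*(e * ln (norm z' / r))" by (simp add: v_def algebra_simps)
      also have "\<dots> \<le> Imean (\<lambda>t. h (circp z' \<rho> t)) - 2*pi*(e * ln (norm z' / r))"
        using sub[OF that(1), of z'] by simp
      finally show ?thesis using eqI by simp
    qed
    show "v w \<le> S" if "norm w = r \<or> norm w = R" for w
      using that
    proof
      assume "norm w = r" thus ?thesis using Sup[of w] r by (simp add: v_def)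
    next
      assume w: "norm w = R"
      have "v w = h w - e * ln (R / r)" using w by (simp add: v_def)
      also have "\<dots> \<le> C - 2 * C" using bnd[of w] eln by (simp add: abs_le_iff)
      also have "\<dots> \<le> S" using SC by simp
      finally show ?thesis .
    qed
    show "r \<le> norm z" "norm z \<le> R" using z by (auto simp: R_def)
  qed
  thus ?thesis unfolding v_def S_def by simp
qed

lemma liouville_core:
  fixes h :: "complex \<Rightarrow> real"
  assumes bnd: "\<And>w. \<bar>h w\<bar> \<le> C"
   and usc: "uscr UNIV h"
   and meas: "h \<in> borel_measurable borel"
   and sub: "\<And>z \<rho>. 0 < \<rho> \<Longrightarrow> 2*pi * h z \<le> Imean (\<lambda>t. h (circp z \<rho> t))"
   and \<rho>: "0 < \<rho>"
  shows "Imean (\<lambda>t. h (circp 0 \<rho> t)) \<le> 2*pi * h 0"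
proof -
  have bdd: "bdd_above (h ` {w. norm w = r})" for r
    using bnd by (intro bdd_aboveI[of _ C]) (auto simp: abs_le_iff)
  have A: "h z \<le> Sup (h ` {w. norm w = r})" if r: "0 < r" and rz: "r \<le> norm z" for r z
  proof (cases "norm z = r")
    case True thus ?thesis using bdd[of r] by (auto intro: cSup_upper)
  next
    case False
    hence rz': "r < norm z" using rz by simp
    have L: "0 < ln (norm z / r)"
    proof -
      have "1 < norm z / r" using r rz' by simp
      thus ?thesis by simp
    qed
    show ?thesis
    proof (rule field_le_epsilon)
      fix d :: real assume d: "0 < d"
      have "h z \<le> Sup (h ` {w. norm w = r}) + (d / ln (norm z / r)) * ln (norm z / r)"
        by (rule outer_bound[OF bnd usc meas _ r rz' divide_pos_pos[OF d L]]) (rule sub)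
      thus "h z \<le> Sup (h ` {w. norm w = r}) + d" using L by simp
    qed
  qed
  show ?thesis
  proof (rule field_le_epsilon)
    fix \<delta> :: real assume \<delta>: "0 < \<delta>"
    define \<delta>' where "\<delta>' = \<delta> / (2*pi)"
    have \<delta>': "0 < \<delta>'" using \<delta> by (simp add: \<delta>'_def)
    have "h 0 < h 0 + \<delta>'" using \<delta>' by simp
    then obtain d where d: "d > 0" "\<And>w. dist w 0 < d \<Longrightarrow> h w < h 0 + \<delta>'"
      using usc unfolding uscr_def by blast
    define r where "r = min (d/2) \<rho>"
    have r: "0 < r" "r < d" "r \<le> \<rho>" using d \<rho> by (auto simp: r_def)
    have ne: "{w::complex. norm w = r} \<noteq> {}"
      using r by (intro ex_in_conv[THEN iffD1] exI[of _ "complex_of_real r"]) auto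
    have Sr: "Sup (h ` {w. norm w = r}) \<le> h 0 + \<delta>'"
    proof (rule cSup_least)
      show "h ` {w. norm w = r} \<noteq> {}" using ne by simp
      fix y assume "y \<in> h ` {w. norm w = r}"
      then obtain w where "norm w = r" "y = h w" by auto
      thus "y \<le> h 0 + \<delta>'" using d(2)[of w] r by (simp add: dist_norm)
    qed
    have le: "h (circp 0 \<rho> t) \<le> h 0 + \<delta>'" for t
    proof -
      have "r \<le> norm (circp 0 \<rho> t)" using norm_circ0[of \<rho> t] \<rho> r by simp
      thus ?thesis using A[OF r(1)] Sr by (meson order_trans)
    qed
    have hi: "set_integrable lborel {0..2*pi} (\<lambda>t. h (circp 0 \<rho> t))"
      by (rule I_integrable_bounded[where C=C]) (auto intro: measurable_compose[OF circ_meas meas] bnd)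
    have ci: "set_integrable lborel {0..2*pi} (\<lambda>t. h 0 + \<delta>')"
      by (rule I_integrable_bounded[where C="\<bar>h 0 + \<delta>'\<bar>"]) auto
    have "Imean (\<lambda>t. h (circp 0 \<rho> t)) \<le> Imean (\<lambda>t. h 0 + \<delta>')" by (rule I_mono[OF hi ci le])
    also have "\<dots> = 2*pi*h 0 + \<delta>" unfolding I_const by (simp add: \<delta>'_def algebra_simps)
    finally show "Imean (\<lambda>t. h (circp 0 \<rho> t)) \<le> 2*pi*h 0 + \<delta>" .
  qed
qed



lemma uscr_meas:
  fixes h :: "complex \<Rightarrow> real"
  assumes "uscr UNIV h" shows "h \<in> borel_measurable borel"
proof (rule borel_measurableI_less)
  fix y
  have "open {x. h x < y}" unfolding open_dist
  proof (intro ballI)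
    fix x assume "x \<in> {x. h x < y}"
    hence "h x < y" by simp
    then obtain d where "d > 0" "\<forall>w. dist w x < d \<longrightarrow> h w < y"
      using assms unfolding uscr_def by blast
    thus "\<exists>e>0. \<forall>y'. dist y' x < e \<longrightarrow> y' \<in> {x. h x < y}" by auto
  qed
  thus "{x \<in> space borel. h x < y} \<in> sets borel" by simp
qed

lemma cscale_add: "cscale x B + cscale y B = cscale (x + y) (B::complex^'n^'n)"
  by (simp add: cscale_def Finite_Cartesian_Product.vec_eq_iff algebra_simps)

lemma cscale_cscale: "cscale x (cscale y B) = cscale (x * y) (B::complex^'n^'n)"
  by (simp add: cscale_def Finite_Cartesian_Product.vec_eq_iff algebra_simps)

lemma norm_sq_mat: "(norm (M::complex^'n^'m))^2 = (\<Sum>i\<in>UNIV. \<Sum>j\<in>UNIV. (cmod (M $ i $ j))^2)"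
proof -
  have row: "(norm (M $ i))^2 = (\<Sum>j\<in>UNIV. (cmod (M $ i $ j))^2)" for i
    unfolding norm_vec_def L2_set_def by (simp add: sum_nonneg)
  show ?thesis unfolding norm_vec_def[of M] L2_set_def
    by (simp add: sum_nonneg row[symmetric])
qed

lemma norm_cscale: "norm (cscale z (B::complex^'n^'n)) = cmod z * norm B"
proof -
  have "(norm (cscale z B))^2 = (cmod z * norm B)^2"
    unfolding norm_sq_mat power_mult_distrib
    by (simp add: cscale_def norm_mult power_mult_distrib sum_distrib_left)
  thus ?thesis by (simp add: power2_eq_imp_eq)
qed

lemma CM:
  fixes F :: "real \<Rightarrow> ereal" and H :: "real \<Rightarrow> real"
  assumes le: "\<And>t. t \<in> {0..2*pi} \<Longrightarrow> F t \<le> ereal (H t)"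
    and Hi: "set_integrable lborel {0..2*pi} H"
  shows "ereal (1/(2*pi)) * (enn2ereal (\<integral>\<^sup>+ t\<in>{0..2*pi}. e2ennreal (F t) \<partial>lborel)
            - enn2ereal (\<integral>\<^sup>+ t\<in>{0..2*pi}. e2ennreal (- F t) \<partial>lborel))
         \<le> ereal (Imean H / (2*pi))"
proof -
  let ?S = "{0..2*pi::real}"
  define f where "f t = indicator ?S t *\<^sub>R H t" for t
  have fi: "integrable lborel f" using Hi unfolding set_integrable_def f_def .
  have ef: "ennreal (f t) = ennreal (H t) * indicator ?S t" for t
    by (simp add: f_def indicator_def)
  have ef2: "ennreal (- f t) = ennreal (- H t) * indicator ?S t" for t
    by (simp add: f_def indicator_def)
  have a: "(\<integral>\<^sup>+ t\<in>?S. e2ennreal (F t) \<partial>lborel) \<le> (\<integral>\<^sup>+ t. ennreal (f t) \<partial>lborel)"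
    unfolding ef
  proof (rule nn_integral_mono)
    fix t show "e2ennreal (F t) * indicator ?S t \<le> ennreal (H t) * indicator ?S t"
      using e2ennreal_mono[OF le[of t]] by (auto simp: indicator_def)
  qed
  have b: "(\<integral>\<^sup>+ t. ennreal (- f t) \<partial>lborel) \<le> (\<integral>\<^sup>+ t\<in>?S. e2ennreal (- F t) \<partial>lborel)"
    unfolding ef2
  proof (rule nn_integral_mono)
    fix t
    have "t \<in> ?S \<Longrightarrow> ereal (- H t) \<le> - F t" using le[of t]
      by (metis ereal_minus_le_minus uminus_ereal.simps(1))
    from e2ennreal_mono[OF this]
    show "ennreal (- H t) * indicator ?S t \<le> e2ennreal (- F t) * indicator ?S t"
      by (auto simp: indicator_def)
  qed
  have fin1: "(\<integral>\<^sup>+ t. ennreal (f t) \<partial>lborel) \<noteq> \<infinity>" using integrableD(2)[OF fi] .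
  have fin2: "(\<integral>\<^sup>+ t. ennreal (- f t) \<partial>lborel) \<noteq> \<infinity>" using integrableD(3)[OF fi] .
  have conv: "enn2ereal x = ereal (enn2real x)" if "x \<noteq> \<infinity>" for x
    using that by (cases x rule: ennreal_cases) auto
  have "enn2ereal (\<integral>\<^sup>+ t\<in>?S. e2ennreal (F t) \<partial>lborel) - enn2ereal (\<integral>\<^sup>+ t\<in>?S. e2ennreal (- F t) \<partial>lborel)
        \<le> enn2ereal (\<integral>\<^sup>+ t. ennreal (f t) \<partial>lborel) - enn2ereal (\<integral>\<^sup>+ t. ennreal (- f t) \<partial>lborel)"
    by (rule ereal_minus_mono) (use a b in \<open>simp_all add: less_eq_ennreal.rep_eq[symmetric]\<close>)
  also have "\<dots> = ereal (integral\<^sup>L lborel f)"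
    unfolding real_lebesgue_integral_def[OF fi] conv[OF fin1] conv[OF fin2] by simp
  also have "integral\<^sup>L lborel f = Imean H"
    unfolding Imean_def set_lebesgue_integral_def f_def ..
  finally have X: "enn2ereal (\<integral>\<^sup>+ t\<in>?S. e2ennreal (F t) \<partial>lborel) - enn2ereal (\<integral>\<^sup>+ t\<in>?S. e2ennreal (- F t) \<partial>lborel) \<le> ereal (Imean H)" .
  have "ereal (1/(2*pi)) * (enn2ereal (\<integral>\<^sup>+ t\<in>?S. e2ennreal (F t) \<partial>lborel) - enn2ereal (\<integral>\<^sup>+ t\<in>?S. e2ennreal (- F t) \<partial>lborel))
        \<le> ereal (1/(2*pi)) * ereal (Imean H)"
    by (rule ereal_mult_left_mono[OF X]) simp
  also have "\<dots> = ereal (Imean H / (2*pi))" by simp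
  finally show ?thesis .
qed

lemma poly_id: "(x + r*(c*p - s*q))^2 + (y + r*(c*q + s*p))^2 = x^2 + y^2 + r^2*(c^2+s^2)*(p^2+q^2) + 2*r*(c*(x*p+y*q) + s*(y*p - x*q))"
  for x y r c s p q :: real
  by (simp add: power2_eq_square algebra_simps)

lemma cmod_exp: "(cmod (a + complex_of_real \<rho> * cis t * b))^2 = (cmod a)^2 + \<rho>^2 * (cmod b)^2
   + 2*\<rho>*(cos t * (Re a * Re b + Im a * Im b) + sin t * (Im a * Re b - Re a * Im b))"
proof -
  have sc: "(cos t)^2 + (sin t)^2 = 1" by simp
  have "(cmod (a + complex_of_real \<rho> * cis t * b))^2 =
      (Re a + \<rho> * (cos t * Re b - sin t * Im b))^2 + (Im a + \<rho> * (cos t * Im b + sin t * Re b))^2"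
    by (simp add: cmod_power2 algebra_simps)
  also have "\<dots> = (Re a)^2 + (Im a)^2 + \<rho>^2 * ((cos t)^2 + (sin t)^2) * ((Re b)^2 + (Im b)^2)
     + 2*\<rho>*(cos t * (Re a * Re b + Im a * Im b) + sin t * (Im a * Re b - Re a * Im b))"
    by (rule poly_id)
  also have "\<dots> = (cmod a)^2 + \<rho>^2 * (cmod b)^2
     + 2*\<rho>*(cos t * (Re a * Re b + Im a * Im b) + sin t * (Im a * Re b - Re a * Im b))"
    unfolding sc by (simp add: cmod_power2)
  finally show ?thesis .
qed

lemma norm_line_sq:
  fixes A B :: "complex^'n^'n"
  shows "(norm (A + cscale (complex_of_real \<rho> * cis t) B))^2 = (norm A)^2 + \<rho>^2 * (norm B)^2
     + 2*\<rho>*(cos t * (\<Sum>i\<in>UNIV. \<Sum>j\<in>UNIV. Re (A$i$j) * Re (B$i$j) + Im (A$i$j) * Im (B$i$j))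
            + sin t * (\<Sum>i\<in>UNIV. \<Sum>j\<in>UNIV. Im (A$i$j) * Re (B$i$j) - Re (A$i$j) * Im (B$i$j)))"
proof -
  have "(norm (A + cscale (complex_of_real \<rho> * cis t) B))^2 =
     (\<Sum>i\<in>UNIV. \<Sum>j\<in>UNIV. (cmod (A$i$j + complex_of_real \<rho> * cis t * B$i$j))^2)"
    unfolding norm_sq_mat by (simp add: cscale_def)
  also have "\<dots> = (\<Sum>i\<in>UNIV. \<Sum>j\<in>UNIV. (cmod (A$i$j))^2 + \<rho>^2 * (cmod (B$i$j))^2
   + 2*\<rho>*(cos t * (Re (A$i$j) * Re (B$i$j) + Im (A$i$j) * Im (B$i$j)) + sin t * (Im (A$i$j) * Re (B$i$j) - Re (A$i$j) * Im (B$i$j))))"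
    by (simp only: cmod_exp)
  also have "\<dots> = (norm A)^2 + \<rho>^2 * (norm B)^2
     + 2*\<rho>*(cos t * (\<Sum>i\<in>UNIV. \<Sum>j\<in>UNIV. Re (A$i$j) * Re (B$i$j) + Im (A$i$j) * Im (B$i$j))
            + sin t * (\<Sum>i\<in>UNIV. \<Sum>j\<in>UNIV. Im (A$i$j) * Re (B$i$j) - Re (A$i$j) * Im (B$i$j)))"
    unfolding norm_sq_mat by (simp add: sum.distrib sum_distrib_left sum_subtractf algebra_simps)
  finally show ?thesis .
qed

lemma Imean_trig: "Imean (\<lambda>t. \<alpha> + \<beta> * cos t + \<gamma> * sin t) = 2*pi*\<alpha>"
proof -
  have ic: "set_integrable lborel {0..2*pi} (\<lambda>t. \<beta> * cos t)"
    by (rule borel_integrable_atLeastAtMost') (intro continuous_intros)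
  have isn: "set_integrable lborel {0..2*pi} (\<lambda>t. \<gamma> * sin t)"
    by (rule borel_integrable_atLeastAtMost') (intro continuous_intros)
  have ia: "set_integrable lborel {0..2*pi} (\<lambda>t. \<alpha>)"
    by (rule borel_integrable_atLeastAtMost') (intro continuous_intros)
  have c: "Imean (\<lambda>t. \<beta> * cos t) = 0"
  proof -
    have "integral\<^sup>L lborel (\<lambda>x. indicator {0..2*pi} x *\<^sub>R (\<beta> * cos x)) = \<beta> * sin (2*pi) - \<beta> * sin 0"
      by (rule integral_FTC_atLeastAtMost) (auto simp: has_real_derivative_iff_has_vector_derivative[symmetric] intro!: derivative_eq_intros continuous_intros)
    thus ?thesis unfolding Imean_def set_lebesgue_integral_def by simp
  qed
  have s: "Imean (\<lambda>t. \<gamma> * sin t) = 0"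
  proof -
    have "integral\<^sup>L lborel (\<lambda>x. indicator {0..2*pi} x *\<^sub>R (\<gamma> * sin x)) = (- \<gamma> * cos (2*pi)) - (- \<gamma> * cos 0)"
      by (rule integral_FTC_atLeastAtMost) (auto simp: has_real_derivative_iff_has_vector_derivative[symmetric] intro!: derivative_eq_intros continuous_intros)
    thus ?thesis unfolding Imean_def set_lebesgue_integral_def by simp
  qed
  have "Imean (\<lambda>t. \<alpha> + \<beta> * cos t + \<gamma> * sin t) = Imean (\<lambda>t. \<alpha>) + Imean (\<lambda>t. \<beta> * cos t) + Imean (\<lambda>t. \<gamma> * sin t)"
    unfolding Imean_def
    using set_integral_add(2)[OF set_integral_add(1)[OF ia ic] isn] set_integral_add(2)[OF ia ic] by simp
  thus ?thesis using c s I_const by simp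
qed

lemma cscale_diff: "cscale x B - cscale y B = cscale (x - y) (B::complex^'n^'n)"
  by (simp add: cscale_def Finite_Cartesian_Product.vec_eq_iff algebra_simps)

lemma zero_in_ball: "(0::complex^'n::finite^'n) \<in> spectral_ball"
proof -
  have "cmod c < 1" if "eigenvalue_of (0::complex^'n^'n) c" for c
  proof -
    from that obtain x :: "complex^'n" where x: "x \<noteq> 0" "0 *v x = c *s x" unfolding eigenvalue_of_def by blast
    from x(1) obtain k where k: "x $ k \<noteq> 0"
      by (metis Finite_Cartesian_Product.vec_eq_iff Finite_Cartesian_Product.zero_index)
    have "(c *s x) $ k = 0" unfolding x(2)[symmetric] by (simp add: matrix_vector_mult_def)
    hence "c * x $ k = 0" by simp
    hence "c = 0" using k by simp
    thus ?thesis by simp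
  qed
  thus ?thesis unfolding spectral_ball_def using sr_lt1 by blast
qed

theorem corollary1:
  assumes "CARD('n::finite) \<ge> 2"
  shows "(\<forall>A\<in>(spectral_ball :: (complex^'n^'n) set).
            \<exists>f. holomorphic_immersion f \<and> range f \<subseteq> spectral_ball \<and> A \<in> range f)
       \<and> \<not> (\<exists>u :: complex^'n^'n \<Rightarrow> ereal.
              strictly_plurisubharmonic_on spectral_ball u \<and>
              (\<exists>M::real. \<forall>A\<in>spectral_ball. u A \<le> ereal M))"
proof (intro conjI)
  note n2 = assms
  show "\<forall>A\<in>(spectral_ball :: (complex^'n^'n) set).
            \<exists>f. holomorphic_immersion f \<and> range f \<subseteq> spectral_ball \<and> A \<in> range f"
  proof
    fix A :: "complex^'n^'n" assume A: "A \<in> spectral_ball"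
    obtain B where B: "\<forall>z. A + cscale z B \<in> spectral_ball" "\<exists>i j. B $ i $ j \<noteq> 0"
      using part1[OF n2 A] by blast
    then obtain i j where ij: "B $ i $ j \<noteq> 0" by blast
    show "\<exists>f. holomorphic_immersion f \<and> range f \<subseteq> spectral_ball \<and> A \<in> range f"
    proof (intro exI conjI)
      show "holomorphic_immersion (\<lambda>z. A + cscale z B)" by (rule line_immersion[OF ij])
      show "range (\<lambda>z. A + cscale z B) \<subseteq> spectral_ball" using B(1) by auto
      have "A = A + cscale 0 B" by simp
      thus "A \<in> range (\<lambda>z. A + cscale z B)" by blast
    qed
  qed
  show "\<not> (\<exists>u :: complex^'n^'n \<Rightarrow> ereal.
              strictly_plurisubharmonic_on spectral_ball u \<and>
              (\<exists>M::real. \<forall>A\<in>spectral_ball. u A \<le> ereal M))"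
  proof
    assume "\<exists>u :: complex^'n^'n \<Rightarrow> ereal.
              strictly_plurisubharmonic_on spectral_ball u \<and>
              (\<exists>M::real. \<forall>A\<in>spectral_ball. u A \<le> ereal M)"
    then obtain u :: "complex^'n^'n \<Rightarrow> ereal" and M :: real where
      spsh: "strictly_plurisubharmonic_on spectral_ball u" and uM: "\<And>A. A \<in> spectral_ball \<Longrightarrow> u A \<le> ereal M"
      by blast
    let ?\<Omega> = "spectral_ball :: (complex^'n^'n) set"
    have psh: "plurisubharmonic_on ?\<Omega> u" using spsh unfolding strictly_plurisubharmonic_on_def by blast
    have ufin: "\<And>z. z \<in> ?\<Omega> \<Longrightarrow> u z < \<infinity>" using psh unfolding plurisubharmonic_on_def by blast
    have uusc: "usc_on ?\<Omega> u" using psh unfolding plurisubharmonic_on_def by blast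
    have usub: "\<And>a b. (\<forall>\<zeta>. cmod \<zeta> \<le> 1 \<longrightarrow> a + cscale \<zeta> b \<in> ?\<Omega>) \<Longrightarrow> u a \<le> circle_mean u a b"
      using psh unfolding plurisubharmonic_on_def by blast
    obtain A where A0: "A \<in> connected_component_set ?\<Omega> 0" and uA0: "u A \<noteq> -\<infinity>"
      using psh zero_in_ball unfolding plurisubharmonic_on_def by blast
    have A: "A \<in> ?\<Omega>" using A0 connected_component_subset by blast
    obtain a0 where uA: "u A = ereal a0" using uA0 ufin[OF A] by (cases "u A") auto
    obtain B where B: "B \<noteq> 0" "\<And>z. A + cscale z B \<in> ?\<Omega>"
      using part1[OF n2 A] by blast
    have nB1: "0 < norm B + 1" by (simp add: add_nonneg_pos)
    define K0 where "K0 = \<bar>M\<bar> + \<bar>a0\<bar> + 1"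
    define g where "g \<zeta> = u (A + cscale \<zeta> B)" for \<zeta>
    have gM: "g \<zeta> \<le> ereal M" for \<zeta> unfolding g_def by (rule uM[OF B(2)])
    define h where "h \<zeta> = real_of_ereal (max (g \<zeta>) (ereal (- K0)))" for \<zeta>
    define Mx where "Mx = max M (-K0)"
    have gmax: "max (g \<zeta>) (ereal (- K0)) \<le> ereal Mx" for \<zeta>
    proof (rule max.boundedI)
      show "g \<zeta> \<le> ereal Mx" using gM[of \<zeta>] by (rule order_trans) (simp add: Mx_def)
    qed (simp add: Mx_def)
    have hE: "ereal (h \<zeta>) = max (g \<zeta>) (ereal (- K0))" for \<zeta>
    proof -
      have "max (g \<zeta>) (ereal (- K0)) \<le> ereal Mx" by (rule gmax)
      moreover have "ereal (- K0) \<le> max (g \<zeta>) (ereal (- K0))" by simp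
      ultimately have "\<bar>max (g \<zeta>) (ereal (- K0))\<bar> \<noteq> \<infinity>"
        by (cases "max (g \<zeta>) (ereal (- K0))") auto
      thus ?thesis unfolding h_def by (rule ereal_real')
    qed
    have hb: "\<bar>h \<zeta>\<bar> \<le> K0" for \<zeta>
    proof -
      have "ereal (h \<zeta>) \<le> ereal Mx" unfolding hE by (rule gmax)
      moreover have "ereal (- K0) \<le> ereal (h \<zeta>)" unfolding hE by simp
      ultimately show ?thesis unfolding K0_def Mx_def by auto
    qed
    have gh: "g \<zeta> \<le> ereal (h \<zeta>)" for \<zeta> unfolding hE by simp
    have h0: "h 0 = a0"
    proof -
      have "g 0 = ereal a0" unfolding g_def using uA by simp
      moreover have "- K0 \<le> a0" unfolding K0_def by simp
      ultimately have "ereal (h 0) = ereal a0" unfolding hE by (simp add: max_def)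
      thus ?thesis by simp
    qed
    have dist_line: "dist (A + cscale \<zeta>' B) (A + cscale \<zeta> B) = cmod (\<zeta>' - \<zeta>) * norm B" for \<zeta> \<zeta>'
      by (simp add: dist_norm cscale_diff norm_cscale)
    have husc: "uscr UNIV h" unfolding uscr_def
    proof (intro ballI allI impI)
      fix \<zeta> :: complex and c :: real assume hc: "h \<zeta> < c"
      have gc: "g \<zeta> < ereal c" using le_less_trans[OF gh[of \<zeta>]] hc by simp
      have Kc: "- K0 < c" using hb[of \<zeta>] hc by (simp add: abs_le_iff)
      obtain d where d: "d > 0" "\<forall>W\<in>?\<Omega>. dist W (A + cscale \<zeta> B) < d \<longrightarrow> u W < ereal c"
        using uusc B(2)[of \<zeta>] gc unfolding usc_on_def g_def by blast
      define d' where "d' = d / (norm B + 1)"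
      have d': "d' > 0" unfolding d'_def by (rule divide_pos_pos[OF d(1) nB1])
      show "\<exists>d>0. \<forall>w\<in>UNIV. dist w \<zeta> < d \<longrightarrow> h w < c"
      proof (intro exI[of _ d'] conjI ballI impI)
        show "0 < d'" by fact
        fix w :: complex assume "w \<in> UNIV" "dist w \<zeta> < d'"
        hence wz: "cmod (w - \<zeta>) < d'" by (simp add: dist_norm)
        have "cmod (w - \<zeta>) * norm B \<le> cmod (w - \<zeta>) * (norm B + 1)" by (simp add: mult_left_mono)
        also have "\<dots> < d' * (norm B + 1)" using wz nB1 by (intro mult_strict_right_mono) auto
        also have "\<dots> = d" unfolding d'_def using nB1 by simp
        finally have "dist (A + cscale w B) (A + cscale \<zeta> B) < d" unfolding dist_line .
        hence "g w < ereal c" using d(2) B(2)[of w] unfolding g_def by blast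
        hence "max (g w) (ereal (- K0)) < ereal c" using Kc by simp
        thus "h w < c" unfolding hE[symmetric] by simp
      qed
    qed
    have hmeas: "h \<in> borel_measurable borel" by (rule uscr_meas[OF husc])
    have hci: "set_integrable lborel {0..2*pi} (\<lambda>t. h (circp z \<rho> t))" for z \<rho>
      by (rule I_integrable_bounded[where C=K0]) (auto intro: measurable_compose[OF circ_meas hmeas] hb)
    have line: "A + cscale z B + cscale \<zeta> (cscale (complex_of_real \<rho>) B) = A + cscale (z + \<zeta> * \<rho>) B" for z \<zeta> \<rho>
      by (simp add: cscale_cscale add.assoc cscale_add)
    have hsub: "2*pi * h z \<le> Imean (\<lambda>t. h (circp z \<rho> t))" if \<rho>: "0 < \<rho>" for z \<rho>
    proof -
      define a where "a = A + cscale z B"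
      define b where "b = cscale (complex_of_real \<rho>) B"
      have "\<forall>\<zeta>. cmod \<zeta> \<le> 1 \<longrightarrow> a + cscale \<zeta> b \<in> ?\<Omega>" unfolding a_def b_def line using B(2) by blast
      hence ua: "u a \<le> circle_mean u a b" by (rule usub)
      have Ft: "a + cscale (cis t) b = A + cscale (circp z \<rho> t) B" for t
        unfolding a_def b_def line circp_def by (simp add: mult.commute)
      have "circle_mean u a b \<le> ereal (Imean (\<lambda>t. h (circp z \<rho> t)) / (2*pi))"
        unfolding circle_mean_def Let_def
      proof (rule CM[where F="\<lambda>t. u (a + cscale (cis t) b)"])
        show "u (a + cscale (cis t) b) \<le> ereal (h (circp z \<rho> t))" for t
          unfolding Ft using gh unfolding g_def by blast
      qed (rule hci)
      hence g1: "g z \<le> ereal (Imean (\<lambda>t. h (circp z \<rho> t)) / (2*pi))"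
        using ua unfolding g_def a_def by simp
      have "Imean (\<lambda>t. - K0) \<le> Imean (\<lambda>t. h (circp z \<rho> t))"
        by (rule I_mono[OF I_integrable_bounded[where C="\<bar>K0\<bar>"] hci]) (use hb in \<open>auto simp: abs_le_iff minus_le_iff\<close>)
      hence "2*pi*(-K0) \<le> Imean (\<lambda>t. h (circp z \<rho> t))" unfolding I_const .
      hence g2: "- K0 \<le> Imean (\<lambda>t. h (circp z \<rho> t)) / (2*pi)" by (simp add: field_simps)
      have "ereal (h z) \<le> ereal (Imean (\<lambda>t. h (circp z \<rho> t)) / (2*pi))"
        unfolding hE using g1 g2 by simp
      hence "h z \<le> Imean (\<lambda>t. h (circp z \<rho> t)) / (2*pi)" by simp
      thus ?thesis by (simp add: field_simps)
    qed
    obtain r \<epsilon> where r: "r > 0" and \<epsilon>: "\<epsilon> > 0" and ballr: "ball A r \<subseteq> ?\<Omega>"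
      and pshv: "plurisubharmonic_on (ball A r) (\<lambda>w. u w - ereal (\<epsilon> * (norm w)\<^sup>2))"
      using spsh A unfolding strictly_plurisubharmonic_on_def by blast
    define \<rho> where "\<rho> = r / (2 * (norm B + 1))"
    have \<rho>: "0 < \<rho>" unfolding \<rho>_def using r nB1 by simp
    have \<rho>B: "\<rho> * norm B < r"
    proof -
      have "\<rho> * norm B \<le> \<rho> * (norm B + 1)" using \<rho> by simp
      also have "\<dots> = r / 2"
      proof -
        have "norm B + 1 \<noteq> 0" using nB1 by simp
        thus ?thesis unfolding \<rho>_def by (simp add: field_simps)
      qed
      also have "\<dots> < r" using r by simp
      finally show ?thesis .
    qed
    define b where "b = cscale (complex_of_real \<rho>) B"
    have Pt: "A + cscale (cis t) b = A + cscale (complex_of_real \<rho> * cis t) B" for t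
      unfolding b_def by (simp add: cscale_cscale mult.commute)
    have Pt': "A + cscale (cis t) b = A + cscale (circp 0 \<rho> t) B" for t
      unfolding Pt circp_def by simp
    have disc: "\<forall>\<zeta>. cmod \<zeta> \<le> 1 \<longrightarrow> A + cscale \<zeta> b \<in> ball A r"
    proof (intro allI impI)
      fix \<zeta> :: complex assume "cmod \<zeta> \<le> 1"
      hence "cmod \<zeta> * \<rho> * norm B \<le> \<rho> * norm B" using \<rho> by (simp add: mult_left_le_one_le mult.assoc)
      hence "norm (cscale \<zeta> b) < r" using \<rho>B unfolding b_def cscale_cscale norm_cscale
        by (simp add: norm_mult abs_of_pos[OF \<rho>] mult.assoc)
      thus "A + cscale \<zeta> b \<in> ball A r" by (simp add: dist_norm)
    qed
    have vsub: "u A - ereal (\<epsilon> * (norm A)\<^sup>2) \<le> circle_mean (\<lambda>w. u w - ereal (\<epsilon> * (norm w)\<^sup>2)) A b"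
      using pshv disc unfolding plurisubharmonic_on_def by blast
    define X where "X = (\<Sum>i\<in>UNIV. \<Sum>j\<in>UNIV. Re (A$i$j) * Re (B$i$j) + Im (A$i$j) * Im (B$i$j))"
    define Y where "Y = (\<Sum>i\<in>UNIV. \<Sum>j\<in>UNIV. Im (A$i$j) * Re (B$i$j) - Re (A$i$j) * Im (B$i$j))"
    define \<alpha> where "\<alpha> = (norm A)^2 + \<rho>^2 * (norm B)^2"
    have nP: "(norm (A + cscale (cis t) b))^2 = \<alpha> + (2*\<rho>*X) * cos t + (2*\<rho>*Y) * sin t" for t
      unfolding Pt norm_line_sq \<alpha>_def X_def Y_def by (simp add: algebra_simps)
    define H where "H t = h (circp 0 \<rho> t) - \<epsilon> * (\<alpha> + (2*\<rho>*X) * cos t + (2*\<rho>*Y) * sin t)" for t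
    have qi: "set_integrable lborel {0..2*pi} (\<lambda>t. \<epsilon> * (\<alpha> + (2*\<rho>*X) * cos t + (2*\<rho>*Y) * sin t))"
      by (rule borel_integrable_atLeastAtMost') (intro continuous_intros)
    have Hi: "set_integrable lborel {0..2*pi} H"
      unfolding H_def by (rule set_integral_diff(1)[OF hci qi])
    have "circle_mean (\<lambda>w. u w - ereal (\<epsilon> * (norm w)\<^sup>2)) A b \<le> ereal (Imean H / (2*pi))"
      unfolding circle_mean_def Let_def
    proof (rule CM[where F="\<lambda>t. u (A + cscale (cis t) b) - ereal (\<epsilon> * (norm (A + cscale (cis t) b))\<^sup>2)"])
      show "set_integrable lborel {0..2*pi} H" by (rule Hi)
      fix t
      have "u (A + cscale (cis t) b) \<le> ereal (h (circp 0 \<rho> t))"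
        unfolding Pt' using gh unfolding g_def by blast
      thus "u (A + cscale (cis t) b) - ereal (\<epsilon> * (norm (A + cscale (cis t) b))\<^sup>2) \<le> ereal (H t)"
        unfolding H_def nP by (metis ereal_minus(1) ereal_minus_mono order_refl)
    qed
    moreover have "ereal (a0 - \<epsilon> * (norm A)^2) \<le> circle_mean (\<lambda>w. u w - ereal (\<epsilon> * (norm w)\<^sup>2)) A b"
      using vsub uA by simp
    ultimately have "ereal (a0 - \<epsilon> * (norm A)^2) \<le> ereal (Imean H / (2*pi))" by (rule order_trans[rotated])
    hence main: "a0 - \<epsilon> * (norm A)^2 \<le> Imean H / (2*pi)" by simp
    have "Imean H = Imean (\<lambda>t. h (circp 0 \<rho> t)) - Imean (\<lambda>t. \<epsilon> * (\<alpha> + (2*\<rho>*X) * cos t + (2*\<rho>*Y) * sin t))"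
      unfolding H_def Imean_def by (rule set_integral_diff(2)[OF hci qi])
    also have "Imean (\<lambda>t. \<epsilon> * (\<alpha> + (2*\<rho>*X) * cos t + (2*\<rho>*Y) * sin t)) = \<epsilon> * (2*pi*\<alpha>)"
      using Imean_trig[of \<alpha> "2*\<rho>*X" "2*\<rho>*Y"] unfolding Imean_def by simp
    finally have IH: "Imean H = Imean (\<lambda>t. h (circp 0 \<rho> t)) - \<epsilon> * (2*pi*\<alpha>)" .
    have LC: "Imean (\<lambda>t. h (circp 0 \<rho> t)) \<le> 2*pi * h 0"
      by (rule liouville_core[OF hb husc hmeas hsub \<rho>])
    have "a0 - \<epsilon> * (norm A)^2 \<le> a0 - \<epsilon> * \<alpha>"
    proof -
      have "Imean H / (2*pi) \<le> (2*pi*a0 - \<epsilon> * (2*pi*\<alpha>)) / (2*pi)"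
        using IH LC h0 by (simp add: divide_right_mono)
      also have "\<dots> = a0 - \<epsilon> * \<alpha>" by (simp add: field_simps)
      finally show ?thesis using main by linarith
    qed
    hence "\<epsilon> * (\<rho>^2 * (norm B)^2) \<le> 0" unfolding \<alpha>_def by (simp add: algebra_simps)
    moreover have "0 < \<epsilon> * (\<rho>^2 * (norm B)^2)" using \<epsilon> \<rho> B(1) by simp
    ultimately show False by simp
  qed
qed

end
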